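(* Let $A=\{p_1,\ldots,p_n\}$ be a pseudo-instance of the Pinwheel Scheduling problem (a finite multiset of positive real periods) with $p_i\ge 2$ for all $i$ and density $\rho(A)=\sum_i 1/p_i\le 7/12$. Apply to $A$ the algorithm of Chan and Chin described in the context (specialization with respect to $\{2,3\}$ followed by normalization), producing multisets $B'$ and $C'$ of positive integers. Then the Pinwheel Scheduling instance $B'\cup C'$ is schedulable.
   Context: Pinwheel Scheduling (PS): an instance is a finite multiset of positive integer periods $q_1,\ldots,q_n$ (one per job). A schedule assigns at most one job to each day $1,2,3,\ldots$ (perpetually); it is feasible if every job $i$ is scheduled at least once in every window of $q_i$ consecutive days. The instance is schedulable if a feasible schedule exists. A pseudo-instance is a multiset of positive reals $p_i$; its density is $\rho(A)=\sum_i 1/p_i$, and the density of any multiset $X$ of periods is $\rho(X)=\sum_{p\in X}1/p$ (with $\rho(\emptyset)=0$). Specialization: specializing a multiset of periods with respect to $\{x\}$ ($x$ a positive integer) means rounding each period down to the largest element of $\{x2^j: j\ge 0 \text{ integer}\}$ not exceeding it. The algorithm: split $A=A_2\cup A_3$, where $A_2=\{p_i: 2\cdot 2^j\le p_i<3\cdot 2^j \text{ for some integer } j\ge 0\}$ and $A_3=\{p_i: 3\cdot 2^j\le p_i<2\cdot 2^{j+1}\text{ for some integer } j\ge 0\}$. Let $B$ be the specialization of $A_2$ with respect to $\{2\}$ and $C$ the specialization of $A_3$ with respect to $\{3\}$. Let $r=\lfloor 2\rho(B)\rfloor$ and $s=\lfloor 3\rho(C)\rfloor$, and choose sub-multisets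 $P\subseteq B$, $Q\subseteq C$ with $\rho(B\setminus P)=r/2$ and $\rho(C\setminus Q)=s/3$, so that $\rho(B)=r/2+\rho(P)$ with $0\le\rho(P)<1/2$ and $\rho(C)=s/3+\rho(Q)$ with $0\le \rho(Q)<1/3$. If $\rho(P)+\rho(Q)=0$, set $B'=B$, $C'=C$. Otherwise apply normalization: (a) if $\tfrac43\rho(P)+\rho(Q)\le \tfrac13$: specialize $P$ with respect to $\{3\}$ and move it from $B$ to $C$; (b) if $\tfrac13<\tfrac43\rho(P)+\rho(Q)\le\tfrac23$ and $\rho(P)+\tfrac32\rho(Q)\le\tfrac12$: specialize $Q$ with respect to $\{2\}$ and move it from $C$ to $B$; (c) if $\tfrac13<\tfrac43\rho(P)+\rho(Q)\le\tfrac23$ and $\rho(P)+\tfrac32\rho(Q)>\tfrac12$: specialize $P$ with respect to $\{3\}$ and move it from $B$ to $C$; (d) if $\tfrac43\rho(P)+\rho(Q)>\tfrac23$: make no change. $B'$ and $C'$ denote $B$ and $C$ after normalization. *)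

theory Defs
  imports Complex_Main "HOL-Library.Multiset"
begin

definition dens :: "nat multiset \<Rightarrow> real" where
  "dens X = (\<Sum>p\<in>#X. 1 / real p)"

definition pdens :: "real multiset \<Rightarrow> real" where
  "pdens X = (\<Sum>p\<in>#X. 1 / p)"

text \<open>A schedule for the jobs listed in xs (job i has period xs!i) is a map from
  days to at most one job; it is feasible if every job i occurs in every window of
  xs!i consecutive days (days are 1,2,3,...).\<close>
definition feasible_schedule :: "nat list \<Rightarrow> (nat \<Rightarrow> nat option) \<Rightarrow> bool" where
  "feasible_schedule xs s \<longleftrightarrow>
     (\<forall>i < length xs. \<forall>t \<ge> 1. \<exists>d \<in> {t..<t + xs ! i}. s d = Some i)"

definition schedulable :: "nat multiset \<Rightarrow> bool" where
  "schedulable M \<longleftrightarrow> (\<exists>xs s. mset xs = M \<and> feasible_schedule xs s)"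

definition spec :: "nat \<Rightarrow> real \<Rightarrow> nat" where
  "spec x p = (GREATEST q. (\<exists>j::nat. q = x * 2 ^ j) \<and> real q \<le> p)"

definition in_A2 :: "real \<Rightarrow> bool" where
  "in_A2 p \<longleftrightarrow> (\<exists>j::nat. 2 * 2 ^ j \<le> p \<and> p < 3 * 2 ^ j)"

definition in_A3 :: "real \<Rightarrow> bool" where
  "in_A3 p \<longleftrightarrow> (\<exists>j::nat. 3 * 2 ^ j \<le> p \<and> p < 2 * 2 ^ (j + 1))"

definition cc_B :: "real multiset \<Rightarrow> nat multiset" where
  "cc_B A = image_mset (spec 2) (filter_mset in_A2 A)"

definition cc_C :: "real multiset \<Rightarrow> nat multiset" where
  "cc_C A = image_mset (spec 3) (filter_mset in_A3 A)"

definition cc_choice :: "real multiset \<Rightarrow> nat multiset \<Rightarrow> nat multiset \<Rightarrow> bool" where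
  "cc_choice A P Q \<longleftrightarrow>
     P \<subseteq># cc_B A \<and> Q \<subseteq># cc_C A \<and>
     dens (cc_B A - P) = real_of_int \<lfloor>2 * dens (cc_B A)\<rfloor> / 2 \<and>
     dens (cc_C A - Q) = real_of_int \<lfloor>3 * dens (cc_C A)\<rfloor> / 3"

definition cc_normalize :: "nat multiset \<Rightarrow> nat multiset \<Rightarrow> nat multiset \<Rightarrow> nat multiset
    \<Rightarrow> nat multiset \<times> nat multiset" where
  "cc_normalize B C P Q =
     (if dens P + dens Q = 0 then (B, C)
      else if 4/3 * dens P + dens Q \<le> 1/3
        then (B - P, C + image_mset (\<lambda>p. spec 3 (real p)) P)
      else if 4/3 * dens P + dens Q \<le> 2/3 \<and> dens P + 3/2 * dens Q \<le> 1/2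
        then (B + image_mset (\<lambda>p. spec 2 (real p)) Q, C - Q)
      else if 4/3 * dens P + dens Q \<le> 2/3
        then (B - P, C + image_mset (\<lambda>p. spec 3 (real p)) P)
      else (B, C))"

definition cc_output :: "real multiset \<Rightarrow> nat multiset \<Rightarrow> nat multiset \<Rightarrow> nat multiset \<times> nat multiset" where
  "cc_output A P Q = cc_normalize (cc_B A) (cc_C A) P Q"

end

theory Submission
  imports Defs "HOL-Combinatorics.Permutations"
begin

lemma feasible_perm:
  assumes "mset xs = mset ys" "feasible_schedule xs s"
  shows "\<exists>s'. feasible_schedule ys s'"
proof -
  obtain p where p: "p permutes {..<length ys}" "permute_list p ys = xs"
    using mset_eq_permutation[OF assms(1)] by blast
  have len: "length xs = length ys" using assms(1) by (metis size_mset)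
  have nth: "\<And>i. i < length ys \<Longrightarrow> xs ! i = ys ! p i"
    using p permute_list_nth by metis
  show ?thesis
  proof (intro exI)
    show "feasible_schedule ys (\<lambda>d. map_option p (s d))"
      unfolding feasible_schedule_def
    proof (intro allI impI)
      fix j t :: nat assume j: "j < length ys" and t: "1 \<le> t"
      define i where "i = inv p j"
      have pi: "p i = j" using p(1) i_def by (simp add: permutes_inverses(1))
      have il: "i < length ys" using p(1) j i_def
        by (metis lessThan_iff permutes_def permutes_inv permutes_in_image)
      have "xs ! i = ys ! j" using nth[OF il] pi by simp
      then obtain d where "d \<in> {t..<t + ys ! j}" "s d = Some i"
        using assms(2) il len t unfolding feasible_schedule_def by metis
      then show "\<exists>d\<in>{t..<t + ys ! j}. map_option p (s d) = Some j"
        using pi by auto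
    qed
  qed
qed

lemma feasible_mono:
  assumes "length xs = length ys" "\<And>i. i < length ys \<Longrightarrow> ys ! i \<le> xs ! i"
    "feasible_schedule ys s"
  shows "feasible_schedule xs s"
  unfolding feasible_schedule_def
proof (intro allI impI)
  fix i t :: nat assume i: "i < length xs" and t: "1 \<le> t"
  obtain d where "d \<in> {t..<t + ys ! i}" "s d = Some i"
    using assms(3) i t assms(1) unfolding feasible_schedule_def by metis
  then show "\<exists>d\<in>{t..<t + xs ! i}. s d = Some i"
    using assms(2)[of i] i assms(1) by (intro bexI[of _ d]) auto
qed

lemma sched_replace:
  assumes "schedulable (M1 + image_mset g M2)" "\<And>x. x \<in># M2 \<Longrightarrow> g x \<le> x"
  shows "schedulable (M1 + M2)"
proof -
  obtain xs s where xs: "mset xs = M1 + image_mset g M2" "feasible_schedule xs s"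
    using assms(1) unfolding schedulable_def by blast
  obtain L1 L2 where L: "mset L1 = M1" "mset L2 = M2"
    by (metis ex_mset)
  have "mset xs = mset (L1 @ map g L2)" using xs L by simp
  then obtain s' where s': "feasible_schedule (L1 @ map g L2) s'"
    using feasible_perm xs(2) by blast
  have "feasible_schedule (L1 @ L2) s'"
  proof (rule feasible_mono[OF _ _ s'])
    fix i assume i: "i < length (L1 @ map g L2)"
    show "(L1 @ map g L2) ! i \<le> (L1 @ L2) ! i"
    proof (cases "i < length L1")
      case True then show ?thesis by (simp add: nth_append)
    next
      case False
      then have "i - length L1 < length L2" using i by simp
      then have "L2 ! (i - length L1) \<in># M2" using L(2) by (metis nth_mem_mset)
      then show ?thesis using False assms(2) i by (simp add: nth_append)
    qed
  qed simp
  then show ?thesis unfolding schedulable_def using L by (metis mset_append)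
qed

lemma chain_dvd:
  fixes m :: nat
  assumes "m > 0" "x = m * 2 ^ i" "y = m * 2 ^ j" "x \<le> y"
  shows "x dvd y"
proof -
  have "(2::nat) ^ i \<le> 2 ^ j" using assms by simp
  then have "i \<le> j" by (simp add: power_le_imp_le_exp)
  then have "(2::nat) ^ i dvd 2 ^ j" by (simp add: le_imp_power_dvd)
  then show ?thesis using assms by simp
qed

lemma card_res:
  fixes p q c :: nat
  assumes "p > 0" "p dvd q"
  shows "card {t \<in> {0..<q}. t mod p = c} \<le> q div p"
proof -
  have "{t \<in> {0..<q}. t mod p = c} \<subseteq> (\<lambda>k. c + k * p) ` {0..<q div p}"
  proof
    fix t assume t: "t \<in> {t \<in> {0..<q}. t mod p = c}"
    have tm: "t mod p = c" and tq: "t < q" using t by auto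
    have "t = c + (t div p) * p" using mod_div_mult_eq[of t p] tm by simp
    moreover have "q div p * p = q" using assms(2) by simp
    then have "t < q div p * p" using tq by simp
    then have "t div p < q div p" by (rule less_mult_imp_div_less)
    ultimately show "t \<in> (\<lambda>k. c + k * p) ` {0..<q div p}" by force
  qed
  then have "card {t \<in> {0..<q}. t mod p = c} \<le> card ((\<lambda>k. c + k * p) ` {0..<q div p})"
    by (intro card_mono) auto
  also have "\<dots> \<le> q div p" using card_image_le[of "{0..<q div p}"] by simp
  finally show ?thesis .
qed

lemma dens_add_mset[simp]: "dens (add_mset a M) = 1 / real a + dens M"
  by (simp add: dens_def)
lemma dens_plus[simp]: "dens (M + N) = dens M + dens N"
  by (simp add: dens_def)
lemma dens_empty[simp]: "dens {#} = 0"
  by (simp add: dens_def)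

lemma dens_times:
  assumes "\<forall>p\<in>set xs. p dvd q \<and> p > 0"
  shows "dens (mset xs) * real q = real (\<Sum>p\<leftarrow>xs. q div p)"
  using assms
proof (induction xs)
  case Nil then show ?case by (simp add: dens_def)
next
  case (Cons a xs)
  have "real (q div a) = real q / real a" using Cons.prems by (simp add: real_of_nat_div)
  then show ?case using Cons by (simp add: algebra_simps)
qed

lemma offsets:
  fixes m :: nat
  assumes "sorted xs" "\<forall>x\<in>set xs. \<exists>j. x = m * 2 ^ j" "m > 0" "dens (mset xs) \<le> 1"
  shows "\<exists>a. (\<forall>i<length xs. a i < xs ! i) \<and>
     (\<forall>i<length xs. \<forall>k<length xs. i \<noteq> k \<longrightarrow> (\<forall>t. t mod xs ! i = a i \<longrightarrow> t mod xs ! k \<noteq> a k))"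
  using assms
proof (induction xs rule: rev_induct)
  case Nil then show ?case by simp
next
  case (snoc q xs)
  have sxs: "sorted xs" and le: "\<forall>x\<in>set xs. x \<le> q" using snoc.prems(1) by (auto simp: sorted_append)
  have "\<exists>j. q = m * 2 ^ j" using snoc.prems(2) by simp
  then obtain jq where jq: "q = m * 2 ^ jq" by blast
  have qpos: "q > 0" unfolding jq using snoc.prems(3) by simp
  have dvdq: "\<forall>p\<in>set xs. p dvd q \<and> p > 0"
  proof
    fix p assume p: "p \<in> set xs"
    have "\<exists>j. p = m * 2 ^ j" using snoc.prems(2) p by simp
    then obtain i where pi: "p = m * 2 ^ i" by blast
    have "p \<le> q" using le p by blast
    then have "p dvd q" using chain_dvd[OF snoc.prems(3) pi jq] by blast
    then show "p dvd q \<and> p > 0" using pi snoc.prems(3) by simp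
  qed
  have dsn: "dens (mset (xs @ [q])) = dens (mset xs) + 1 / real q"
    by simp
  have dpos: "1 / real q > 0" using qpos by simp
  have dxs: "dens (mset xs) \<le> 1" using snoc.prems(4) dsn dpos by linarith
  obtain a where a: "\<forall>i<length xs. a i < xs ! i"
     "\<forall>i<length xs. \<forall>k<length xs. i \<noteq> k \<longrightarrow> (\<forall>t. t mod xs ! i = a i \<longrightarrow> t mod xs ! k \<noteq> a k)"
  proof -
    have "\<forall>x\<in>set xs. \<exists>j. x = m * 2 ^ j" using snoc.prems(2) by simp
    from snoc.IH[OF sxs this snoc.prems(3) dxs] show ?thesis using that by blast
  qed
  define S where "S = (\<Union>i<length xs. {t \<in> {0..<q}. t mod xs ! i = a i})"
  have "card S \<le> (\<Sum>i<length xs. card {t \<in> {0..<q}. t mod xs ! i = a i})"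
    unfolding S_def by (rule card_UN_le) simp
  also have "\<dots> \<le> (\<Sum>i<length xs. q div xs ! i)"
    by (intro sum_mono card_res) (use dvdq in auto)
  also have "\<dots> = (\<Sum>p\<leftarrow>xs. q div p)"
    by (simp add: sum_list_sum_nth atLeast0LessThan)
  finally have cS: "real (card S) \<le> dens (mset xs) * real q"
    using dens_times[OF dvdq] by linarith
  have "dens (mset xs) * real q \<le> (1 - 1 / real q) * real q"
    using snoc.prems(4) dsn qpos by (intro mult_right_mono) auto
  also have "\<dots> = real q - 1" using qpos by (simp add: field_simps)
  finally have "card S < card {0..<q}" using cS by simp
  moreover have fS: "finite S" unfolding S_def by auto
  ultimately have "\<not> {0..<q} \<subseteq> S" using card_mono[OF fS, of "{0..<q}"] by linarith
  then obtain b where b: "b \<in> {0..<q}" "b \<notin> S" by blast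
  define a' where "a' = (\<lambda>i. if i < length xs then a i else b)"
  have nth1: "\<And>i. i < length xs \<Longrightarrow> (xs @ [q]) ! i = xs ! i" by (simp add: nth_append)
  have nth2: "(xs @ [q]) ! length xs = q" by simp
  have bmod: "\<And>i t. i < length xs \<Longrightarrow> t mod q = b \<Longrightarrow> t mod xs ! i \<noteq> a i"
  proof -
    fix i t assume i: "i < length xs" and t: "t mod q = b"
    have "xs ! i dvd q" using dvdq i by auto
    then have "t mod xs ! i = b mod xs ! i" using t by (metis mod_mod_cancel)
    moreover have "b mod xs ! i \<noteq> a i" using b i unfolding S_def by auto
    ultimately show "t mod xs ! i \<noteq> a i" by simp
  qed
  have a'i: "\<And>i. i < length xs \<Longrightarrow> a' i = a i" unfolding a'_def by simp
  have a'n: "a' (length xs) = b" unfolding a'_def by simp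
  have P1: "\<forall>i<length (xs @ [q]). a' i < (xs @ [q]) ! i"
  proof (intro allI impI)
    fix i assume il: "i < length (xs @ [q])"
    show "a' i < (xs @ [q]) ! i"
    proof (cases "i < length xs")
      case True
      have "a i < xs ! i" using a(1) True by blast
      then show ?thesis using nth1[OF True] a'i[OF True] by simp
    next
      case False
      then have "i = length xs" using il by simp
      then show ?thesis using b(1) nth2 a'n by simp
    qed
  qed
  have P2: "\<forall>i<length (xs @ [q]). \<forall>k<length (xs @ [q]). i \<noteq> k \<longrightarrow>
      (\<forall>t. t mod (xs @ [q]) ! i = a' i \<longrightarrow> t mod (xs @ [q]) ! k \<noteq> a' k)"
  proof (intro allI impI)
    fix i k t assume i: "i < length (xs @ [q])" and k: "k < length (xs @ [q])" and ik: "i \<noteq> k"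
      and t: "t mod (xs @ [q]) ! i = a' i"
    show "t mod (xs @ [q]) ! k \<noteq> a' k"
    proof (cases "i < length xs")
      case True
      note iT = True
      then have ti: "t mod xs ! i = a i" using t nth1[OF iT] a'i[OF iT] by simp
      show ?thesis
      proof (cases "k < length xs")
        case True
        have "t mod xs ! k \<noteq> a k" using a(2) iT True ik ti by blast
        then show ?thesis using nth1[OF True] a'i[OF True] by simp
      next
        case False
        then have keq: "k = length xs" using k by simp
        have "t mod q \<noteq> b" using bmod[OF iT] ti by blast
        then show ?thesis using keq nth2 a'n by simp
      qed
    next
      case False
      then have ieq: "i = length xs" using i by simp
      then have kl: "k < length xs" using k ik by simp
      have "t mod q = b" using t ieq nth2 a'n by simp
      then have "t mod xs ! k \<noteq> a k" using bmod[OF kl] by blast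
      then show ?thesis using nth1[OF kl] a'i[OF kl] by simp
    qed
  qed
  show ?case by (rule exI[of _ a'], rule conjI[OF P1 P2])
qed

lemma sched_from_offsets:
  assumes pos: "\<forall>i<length xs. 0 < xs ! i" and lt: "\<forall>i<length xs. a i < xs ! i"
    and dis: "\<forall>i<length xs. \<forall>k<length xs. i \<noteq> k \<longrightarrow> (\<forall>t. t mod xs ! i = a i \<longrightarrow> t mod xs ! k \<noteq> a k)"
  shows "\<exists>s. feasible_schedule xs s"
proof -
  define s where "s = (\<lambda>d. if \<exists>i<length xs. d mod xs ! i = a i
      then Some (SOME i. i < length xs \<and> d mod xs ! i = a i) else None)"
  have "feasible_schedule xs s"
    unfolding feasible_schedule_def
  proof (intro allI impI)
    fix i t :: nat assume i: "i < length xs" and t: "1 \<le> t"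
    define p where "p = xs ! i"
    have pp: "0 < p" using pos i p_def by simp
    have ap: "a i < p" using lt i p_def by simp
    define r where "r = t mod p"
    define q0 where "q0 = t div p"
    have tq: "t = p * q0 + r" unfolding r_def q0_def by simp
    have rp: "r < p" unfolding r_def using pp by simp
    define k where "k = (if r \<le> a i then q0 else q0 + 1)"
    define d where "d = p * k + a i"
    have dmod: "d mod p = a i" unfolding d_def using ap by simp
    have drange: "d \<in> {t..<t + p}" unfolding d_def k_def using tq rp ap by auto
    have ex: "\<exists>i'<length xs. d mod xs ! i' = a i'" using i dmod p_def by blast
    define j where "j = (SOME i. i < length xs \<and> d mod xs ! i = a i)"
    have j: "j < length xs \<and> d mod xs ! j = a j"
      unfolding j_def by (rule someI_ex) (use ex in blast)
    have "j = i"
    proof (rule ccontr)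
      assume "j \<noteq> i"
      then show False using dis j i dmod p_def by blast
    qed
    then have "s d = Some i" unfolding s_def j_def[symmetric] using ex by simp
    then show "\<exists>d\<in>{t..<t + xs ! i}. s d = Some i" using drange p_def by blast
  qed
  then show ?thesis by blast
qed

lemma harmonic:
  fixes m :: nat
  assumes "m > 0" "\<forall>x\<in>#M. \<exists>j. x = m * 2 ^ j" "dens M \<le> 1"
  shows "schedulable M"
proof -
  define xs where "xs = sorted_list_of_multiset M"
  have mx: "mset xs = M" unfolding xs_def by simp
  have sx: "sorted xs" unfolding xs_def by simp
  have ty: "\<forall>x\<in>set xs. \<exists>j. x = m * 2 ^ j" using assms(2) mx by (metis set_mset_mset)
  obtain a where a: "\<forall>i<length xs. a i < xs ! i"
     "\<forall>i<length xs. \<forall>k<length xs. i \<noteq> k \<longrightarrow> (\<forall>t. t mod xs ! i = a i \<longrightarrow> t mod xs ! k \<noteq> a k)"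
    using offsets[OF sx ty assms(1)] assms(3) mx by blast
  have pos: "\<forall>i<length xs. 0 < xs ! i"
  proof (intro allI impI)
    fix i assume "i < length xs"
    then have "xs ! i \<in> set xs" by simp
    then obtain j where "xs ! i = m * 2 ^ j" using ty by blast
    then show "0 < xs ! i" using assms(1) by simp
  qed
  obtain s where "feasible_schedule xs s" using sched_from_offsets[OF pos a] by blast
  then show ?thesis unfolding schedulable_def using mx by blast
qed

lemma dens_nonneg: "dens M \<ge> 0"
  by (induction M) auto

lemma subsum_list:
  fixes m :: nat
  assumes "sorted xs" "\<forall>x\<in>set xs. \<exists>j. x = m * 2 ^ j" "m > 0"
  shows "\<forall>k::nat. real k / real m \<le> dens (mset xs) \<longrightarrow> (\<exists>N. N \<subseteq># mset xs \<and> dens N = real k / real m)"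
  using assms
proof (induction xs rule: rev_induct)
  case Nil
  show ?case
  proof (intro allI impI)
    fix k :: nat assume "real k / real m \<le> dens (mset [])"
    then have "real k / real m = 0" using Nil.prems(3) by (simp add: divide_le_0_iff)
    then show "\<exists>N. N \<subseteq># mset [] \<and> dens N = real k / real m" by (intro exI[of _ "{#}"]) simp
  qed
next
  case (snoc q xs)
  have sxs: "sorted xs" and le: "\<forall>x\<in>set xs. x \<le> q" using snoc.prems(1) by (auto simp: sorted_append)
  have "\<exists>j. q = m * 2 ^ j" using snoc.prems(2) by simp
  then obtain jq where jq: "q = m * 2 ^ jq" by blast
  have qpos: "q > 0" unfolding jq using snoc.prems(3) by simp
  have dvdq: "\<forall>p\<in>set xs. p dvd q \<and> p > 0"
  proof
    fix p assume p: "p \<in> set xs"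
    have "\<exists>j. p = m * 2 ^ j" using snoc.prems(2) p by simp
    then obtain i where pi: "p = m * 2 ^ i" by blast
    have "p \<le> q" using le p by blast
    then have "p dvd q" using chain_dvd[OF snoc.prems(3) pi jq] by blast
    then show "p dvd q \<and> p > 0" using pi snoc.prems(3) by simp
  qed
  have ty: "\<forall>x\<in>set xs. \<exists>j. x = m * 2 ^ j" using snoc.prems(2) by simp
  note IH = snoc.IH[OF sxs ty snoc.prems(3)]
  show ?case
  proof (intro allI impI)
    fix k :: nat assume k: "real k / real m \<le> dens (mset (xs @ [q]))"
    show "\<exists>N. N \<subseteq># mset (xs @ [q]) \<and> dens N = real k / real m"
    proof (cases "real k / real m \<le> dens (mset xs)")
      case True
      then obtain N where N: "N \<subseteq># mset xs" "dens N = real k / real m" using IH by blast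
      have "mset xs \<subseteq># mset (xs @ [q])" by simp
      then show ?thesis using N by (meson subset_mset.order_trans)
    next
      case False
      define c where "c = (\<Sum>p\<leftarrow>xs. q div p)"
      have c: "dens (mset xs) * real q = real c" unfolding c_def by (rule dens_times[OF dvdq])
      have d2: "dens (mset (xs @ [q])) = dens (mset xs) + 1 / real q" by simp
      have mq: "real k / real m * real q = real (k * 2 ^ jq)" unfolding jq using snoc.prems(3) by simp
      have "dens (mset xs) * real q < real k / real m * real q"
        using False qpos by (intro mult_strict_right_mono) auto
      then have "real c < real (k * 2 ^ jq)" using c mq by linarith
      then have l1: "c < k * 2 ^ jq" by (simp only: of_nat_less_iff)
      have "real k / real m * real q \<le> (dens (mset xs) + 1 / real q) * real q"
        using k d2 qpos by (intro mult_right_mono) auto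
      also have "\<dots> = real c + 1" using c qpos by (simp add: field_simps)
      finally have "real (k * 2 ^ jq) \<le> real (c + 1)" using mq by simp
      then have l2: "k * 2 ^ jq \<le> c + 1" by (simp only: of_nat_le_iff)
      have "k * 2 ^ jq = c + 1" using l1 l2 by simp
      then have "real (k * 2 ^ jq) = real c + 1" by simp
      then have "real k / real m * real q = dens (mset xs) * real q + 1" using c mq by linarith
      then have "real k / real m = dens (mset xs) + 1 / real q" using qpos
        by (simp add: field_simps)
      then show ?thesis using d2 by (intro exI[of _ "mset (xs @ [q])"]) simp
    qed
  qed
qed

lemma choice_exists:
  fixes m :: nat and M :: "nat multiset"
  assumes "\<forall>x\<in>#M. \<exists>j. x = m * 2 ^ j" "m > 0"
  shows "\<exists>P. P \<subseteq># M \<and> dens (M - P) = real_of_int \<lfloor>real m * dens M\<rfloor> / real m"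
proof -
  define xs where "xs = sorted_list_of_multiset M"
  have mx: "mset xs = M" unfolding xs_def by simp
  have sx: "sorted xs" unfolding xs_def by simp
  have ty: "\<forall>x\<in>set xs. \<exists>j. x = m * 2 ^ j" using assms(1) mx by (metis set_mset_mset)
  have dn: "dens M \<ge> 0" by (rule dens_nonneg)
  define k where "k = nat \<lfloor>real m * dens M\<rfloor>"
  have rk: "real k = real_of_int \<lfloor>real m * dens M\<rfloor>" unfolding k_def using dn by simp
  have "real k \<le> real m * dens M" using rk by simp
  then have "real k / real m \<le> dens M" using assms(2) by (simp add: field_simps)
  then obtain N where N: "N \<subseteq># M" "dens N = real k / real m"
    using subsum_list[OF sx ty assms(2)] mx by blast
  have "M - (M - N) = N" using N(1) by (simp add: subset_mset.diff_diff_right)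
  then show ?thesis using N rk by (intro exI[of _ "M - N"]) auto
qed

lemma spec_eq:
  fixes x j :: nat and p :: real
  assumes "x > 0" "real (x * 2 ^ j) \<le> p" "p < real (x * 2 ^ (j + 1))"
  shows "spec x p = x * 2 ^ j"
  unfolding spec_def
proof (rule Greatest_equality)
  show "(\<exists>j'. x * 2 ^ j = x * 2 ^ j') \<and> real (x * 2 ^ j) \<le> p" using assms by blast
next
  fix y assume "(\<exists>j'. y = x * 2 ^ j') \<and> real y \<le> p"
  then obtain i where y: "y = x * 2 ^ i" "real y \<le> p" by blast
  then have "real (x * 2 ^ i) < real (x * 2 ^ (j + 1))" using assms(3) by linarith
  then have "x * 2 ^ i < x * 2 ^ (j + 1)" by (simp only: of_nat_less_iff)
  then have "(2::nat) ^ i < 2 ^ (j + 1)" by simp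
  then have "i < j + 1"
  proof (rule contrapos_pp)
    assume "\<not> i < j + 1"
    then have "(2::nat) ^ (j + 1) \<le> 2 ^ i" by (intro power_increasing) auto
    then show "\<not> (2::nat) ^ i < 2 ^ (j + 1)" by simp
  qed
  then have "(2::nat) ^ i \<le> 2 ^ j" by (simp add: power_increasing)
  then show "y \<le> x * 2 ^ j" using y(1) by simp
qed

lemma spec2_of3: "spec 2 (real (3 * 2 ^ j)) = 2 * 2 ^ j"
  by (rule spec_eq) auto

lemma spec3_of2: "spec 3 (real (2 * 2 ^ (j + 1))) = 3 * 2 ^ j"
  by (rule spec_eq) auto

lemma A2_spec:
  assumes "in_A2 p"
  shows "\<exists>j. spec 2 p = 2 * 2 ^ j \<and> 1 / real (spec 2 p) \<le> 3 / 2 * (1 / p)"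
proof -
  obtain j where j: "2 * 2 ^ j \<le> p" "p < 3 * 2 ^ j" using assms unfolding in_A2_def by blast
  have s: "spec 2 p = 2 * 2 ^ j" by (rule spec_eq) (use j in auto)
  have "(0::real) < 2 * 2 ^ j" by simp
  then have pp: "p > 0" using j by linarith
  have "1 / real (spec 2 p) = 1 / (2 * 2 ^ j)" using s by simp
  also have "\<dots> \<le> 3 / 2 * (1 / p)" using j pp by (simp add: field_simps)
  finally show ?thesis using s by blast
qed

lemma A3_spec:
  assumes "in_A3 p"
  shows "\<exists>j. spec 3 p = 3 * 2 ^ j \<and> 1 / real (spec 3 p) \<le> 4 / 3 * (1 / p)"
proof -
  obtain j where j: "3 * 2 ^ j \<le> p" "p < 2 * 2 ^ (j + 1)" using assms unfolding in_A3_def by blast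
  have s: "spec 3 p = 3 * 2 ^ j" by (rule spec_eq) (use j in auto)
  have "(0::real) < 3 * 2 ^ j" by simp
  then have pp: "p > 0" using j by linarith
  have "1 / real (spec 3 p) = 1 / (3 * 2 ^ j)" using s by simp
  also have "\<dots> \<le> 4 / 3 * (1 / p)" using j pp by (simp add: field_simps)
  finally show ?thesis using s by blast
qed

lemma A2_A3_disj: "\<not> (in_A2 p \<and> in_A3 p)"
proof
  assume "in_A2 p \<and> in_A3 p"
  then obtain j i :: nat where j: "2 * 2 ^ j \<le> p" "p < 3 * 2 ^ j"
    and i: "3 * 2 ^ i \<le> p" "p < 2 * 2 ^ (i + 1)" unfolding in_A2_def in_A3_def by blast
  show False
  proof (cases "i < j")
    case True
    then have "(2::real) ^ (i + 1) \<le> 2 ^ j" by (intro power_increasing) auto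
    then show False using j i by linarith
  next
    case False
    then have "(2::real) ^ j \<le> 2 ^ i" by (intro power_increasing) auto
    then show False using j i by linarith
  qed
qed

lemma pdens_add_mset[simp]: "pdens (add_mset a M) = 1 / a + pdens M"
  by (simp add: pdens_def)
lemma pdens_plus[simp]: "pdens (M + N) = pdens M + pdens N"
  by (simp add: pdens_def)
lemma pdens_empty[simp]: "pdens {#} = 0"
  by (simp add: pdens_def)

lemma pdens_nonneg: "(\<And>x. x \<in># M \<Longrightarrow> x > 0) \<Longrightarrow> pdens M \<ge> 0"
proof (induction M)
  case empty then show ?case by simp
next
  case (add a M)
  have "1 / a > 0" using add.prems by simp
  moreover have "pdens M \<ge> 0" using add by simp
  ultimately show ?case by simp
qed

lemma dens_image_le:
  "(\<And>x. x \<in># X \<Longrightarrow> 1 / real (f x) \<le> c * (1 / x)) \<Longrightarrow> dens (image_mset f X) \<le> c * pdens X"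
proof (induction X)
  case empty then show ?case by simp
next
  case (add a X)
  have "1 / real (f a) \<le> c * (1 / a)" using add.prems by simp
  moreover have "dens (image_mset f X) \<le> c * pdens X" using add by simp
  ultimately show ?case by (simp add: algebra_simps)
qed

lemma dens_image_eq:
  "(\<And>x. x \<in># X \<Longrightarrow> 1 / real (f x) = c * (1 / real x)) \<Longrightarrow> dens (image_mset f X) = c * dens X"
  by (induction X) (auto simp: algebra_simps)

lemma dens_diff: "N \<subseteq># M \<Longrightarrow> dens (M - N) = dens M - dens N"
proof -
  assume "N \<subseteq># M"
  then have "M - N + N = M" by (rule subset_mset.diff_add)
  then have "dens (M - N) + dens N = dens M" by (metis dens_plus)
  then show ?thesis by linarith
qed

lemma dens_zero_empty:
  assumes "dens M = 0" "\<And>x. x \<in># M \<Longrightarrow> x > 0"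
  shows "M = {#}"
proof (rule ccontr)
  assume "M \<noteq> {#}"
  then obtain a where a: "a \<in># M" by blast
  then have e: "add_mset a (M - {#a#}) = M" by simp
  have "dens M = 1 / real a + dens (M - {#a#})" using dens_add_mset[of a "M - {#a#}"] e by simp
  moreover have "1 / real a > 0" using assms(2)[OF a] by simp
  moreover have "dens (M - {#a#}) \<ge> 0" by (rule dens_nonneg)
  ultimately show False using assms(1) by linarith
qed

lemma schedA:
  assumes "\<forall>x\<in>#M1. \<exists>j. x = 2 * 2 ^ j" "\<forall>x\<in>#M2. \<exists>j. x = 3 * 2 ^ j"
    "dens M1 + 3 / 2 * dens M2 \<le> 1"
  shows "schedulable (M1 + M2)"
proof -
  let ?g = "\<lambda>p. spec 2 (real p)"
  have g3: "\<exists>j. x = 3 * 2 ^ j \<and> ?g x = 2 * 2 ^ j" if xin: "x \<in># M2" for x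
  proof -
    obtain j where xj: "x = 3 * 2 ^ j" using assms(2) xin by blast
    have "?g x = 2 * 2 ^ j" unfolding xj by (rule spec2_of3)
    then show ?thesis using xj by blast
  qed
  have gle: "?g x \<le> x" if xin: "x \<in># M2" for x
  proof -
    obtain j where j: "x = 3 * 2 ^ j" "?g x = 2 * 2 ^ j" using g3[OF xin] by blast
    have "(2::nat) * 2 ^ j \<le> 3 * 2 ^ j" by simp
    then show ?thesis using j by linarith
  qed
  have "dens (image_mset ?g M2) = 3 / 2 * dens M2"
  proof (rule dens_image_eq)
    fix x assume "x \<in># M2"
    then obtain j where j: "x = 3 * 2 ^ j" "?g x = 2 * 2 ^ j" using g3 by blast
    have "1 / real (2 * 2 ^ j :: nat) = 3 / 2 * (1 / real (3 * 2 ^ j :: nat))" by (simp add: field_simps)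
    then show "1 / real (?g x) = 3 / 2 * (1 / real x)" unfolding j(2) unfolding j(1) .
  qed
  moreover have "\<forall>x\<in>#M1 + image_mset ?g M2. \<exists>j. x = 2 * 2 ^ j"
  proof
    fix x assume "x \<in># M1 + image_mset ?g M2"
    then have "x \<in># M1 \<or> x \<in># image_mset ?g M2" by simp
    then show "\<exists>j. x = 2 * 2 ^ j"
    proof
      assume "x \<in># M1" then show ?thesis using assms(1) by blast
    next
      assume "x \<in># image_mset ?g M2"
      then obtain y where y: "y \<in># M2" "x = ?g y" by (auto simp only: in_image_mset)
      obtain j where "?g y = 2 * 2 ^ j" using g3[OF y(1)] by blast
      then show ?thesis using y(2) by blast
    qed
  qed
  moreover have "dens (M1 + image_mset ?g M2) \<le> 1" using assms(3) calculation(1) by simp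
  ultimately have "schedulable (M1 + image_mset ?g M2)"
    by (intro harmonic[of 2]) simp_all
  then show ?thesis using sched_replace[of M1 ?g M2] gle by blast
qed

lemma schedB:
  assumes "\<forall>x\<in>#M. \<exists>j. x = 3 * 2 ^ j" "dens M \<le> 1"
  shows "schedulable M"
  by (rule harmonic[of 3]) (use assms in auto)

theorem theorem1:
  fixes A :: "real multiset"
  assumes "\<forall>p \<in># A. p \<ge> 2"
    and "pdens A \<le> 7/12"
  shows "(\<exists>P Q. cc_choice A P Q) \<and>
         (\<forall>P Q. cc_choice A P Q \<longrightarrow>
            schedulable (fst (cc_output A P Q) + snd (cc_output A P Q)))"
proof -
  define B where "B = cc_B A"
  define C where "C = cc_C A"
  define X2 where "X2 = filter_mset in_A2 A"
  define X3 where "X3 = filter_mset in_A3 A"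
  define Xn where "Xn = filter_mset (\<lambda>p. \<not> in_A2 p) A"
  have Apos: "\<And>p. p \<in># A \<Longrightarrow> p > 0" using assms(1) by fastforce
  have tyB: "\<forall>x\<in>#B. \<exists>j. x = 2 * 2 ^ j"
  proof
    fix x assume "x \<in># B"
    then obtain p where p: "p \<in># X2" "x = spec 2 p" unfolding B_def cc_B_def X2_def by auto
    have "in_A2 p" using p(1) unfolding X2_def by simp
    then show "\<exists>j. x = 2 * 2 ^ j" using A2_spec p(2) by blast
  qed
  have tyC: "\<forall>x\<in>#C. \<exists>j. x = 3 * 2 ^ j"
  proof
    fix x assume "x \<in># C"
    then obtain p where p: "p \<in># X3" "x = spec 3 p" unfolding C_def cc_C_def X3_def by auto
    have "in_A3 p" using p(1) unfolding X3_def by simp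
    then show "\<exists>j. x = 3 * 2 ^ j" using A3_spec p(2) by blast
  qed
  have dB: "dens B \<le> 3 / 2 * pdens X2"
    unfolding B_def cc_B_def X2_def[symmetric]
  proof (rule dens_image_le)
    fix p assume "p \<in># X2"
    then have "in_A2 p" unfolding X2_def by simp
    then show "1 / real (spec 2 p) \<le> 3 / 2 * (1 / p)" using A2_spec by blast
  qed
  have dC: "dens C \<le> 4 / 3 * pdens X3"
    unfolding C_def cc_C_def X3_def[symmetric]
  proof (rule dens_image_le)
    fix p assume "p \<in># X3"
    then have "in_A3 p" unfolding X3_def by simp
    then show "1 / real (spec 3 p) \<le> 4 / 3 * (1 / p)" using A3_spec by blast
  qed
  have part: "A = X2 + Xn" unfolding X2_def Xn_def by (rule multiset_partition)
  have "X3 = filter_mset in_A3 Xn"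
    unfolding X3_def Xn_def using A2_A3_disj by (simp add: filter_filter_mset) (metis)
  then have X3sub: "X3 \<subseteq># Xn" by (simp add: multiset_filter_subset)
  have "Xn - X3 + X3 = Xn" using X3sub by (rule subset_mset.diff_add)
  then have "pdens Xn = pdens (Xn - X3) + pdens X3" by (metis pdens_plus)
  moreover have "pdens (Xn - X3) \<ge> 0"
  proof (rule pdens_nonneg)
    fix x assume "x \<in># Xn - X3"
    then have "x \<in># A" unfolding Xn_def by (meson in_diffD multiset_filter_subset mset_subset_eqD)
    then show "x > 0" by (rule Apos)
  qed
  ultimately have "pdens X3 \<le> pdens Xn" by linarith
  moreover have "pdens A = pdens X2 + pdens Xn" using part by (metis pdens_plus)
  ultimately have sumA: "pdens X2 + pdens X3 \<le> pdens A" by linarith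
  have key: "2 / 3 * dens B + 3 / 4 * dens C \<le> 7 / 12"
    using dB dC sumA assms(2) by linarith
  have part1: "\<exists>P Q. cc_choice A P Q"
  proof -
    obtain P where P: "P \<subseteq># B" "dens (B - P) = real_of_int \<lfloor>real 2 * dens B\<rfloor> / real 2"
      using choice_exists[of B 2] tyB by auto
    obtain Q where Q: "Q \<subseteq># C" "dens (C - Q) = real_of_int \<lfloor>real 3 * dens C\<rfloor> / real 3"
      using choice_exists[of C 3] tyC by auto
    have "cc_choice A P Q" unfolding cc_choice_def B_def[symmetric] C_def[symmetric]
      using P Q by simp
    then show ?thesis by blast
  qed
  have part2: "schedulable (fst (cc_output A P Q) + snd (cc_output A P Q))"
    if ch: "cc_choice A P Q" for P Q
  proof -
    define r where "r = \<lfloor>2 * dens B\<rfloor>"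
    define s where "s = \<lfloor>3 * dens C\<rfloor>"
    define x where "x = dens P"
    define y where "y = dens Q"
    have PB: "P \<subseteq># B" and QC: "Q \<subseteq># C"
      and dBP: "dens (B - P) = real_of_int r / 2" and dCQ: "dens (C - Q) = real_of_int s / 3"
      using ch unfolding cc_choice_def B_def[symmetric] C_def[symmetric] r_def s_def by auto
    have hx: "dens B = real_of_int r / 2 + x" using dens_diff[OF PB] dBP x_def by linarith
    have hy: "dens C = real_of_int s / 3 + y" using dens_diff[OF QC] dCQ y_def by linarith
    have fr: "real_of_int r \<le> 2 * dens B" "2 * dens B < real_of_int r + 1" unfolding r_def by linarith+
    have fs: "real_of_int s \<le> 3 * dens C" "3 * dens C < real_of_int s + 1" unfolding s_def by linarith+
    have x0: "0 \<le> x" "x < 1 / 2" using hx fr by linarith+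
    have y0: "0 \<le> y" "y < 1 / 3" using hy fs by linarith+
    have r0: "r \<ge> 0" unfolding r_def using dens_nonneg[of B] by simp
    have s0: "s \<ge> 0" unfolding s_def using dens_nonneg[of C] by simp
    have K: "4 * real_of_int r + 3 * real_of_int s + 8 * x + 9 * y \<le> 7"
      using key hx hy by linarith
    have tyBP: "\<forall>z\<in>#B - P. \<exists>j. z = 2 * 2 ^ j" using tyB by (meson in_diffD)
    have tyCQ: "\<forall>z\<in>#C - Q. \<exists>j. z = 3 * 2 ^ j" using tyC by (meson in_diffD)
    have posBP: "\<And>z. z \<in># B - P \<Longrightarrow> z > 0"
    proof -
      fix z assume "z \<in># B - P"
      then obtain j where "z = 2 * 2 ^ j" using tyBP by blast
      then show "z > 0" by simp
    qed
    have tyP: "\<exists>j. p = 2 * 2 ^ (j + 1)" if pP: "p \<in># P" for p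
    proof -
      have "p \<in># B" using PB pP by (rule mset_subset_eqD)
      then obtain j where pj: "p = 2 * 2 ^ j" using tyB by blast
      show ?thesis
      proof (cases j)
        case 0
        then have p2: "p = 2" using pj by simp
        have e: "add_mset p (P - {#p#}) = P" using pP by simp
        have "dens P = 1 / real p + dens (P - {#p#})" using dens_add_mset[of p "P - {#p#}"] e by simp
        then have "dens P \<ge> 1 / 2" using p2 dens_nonneg[of "P - {#p#}"] by simp
        then show ?thesis using x0 x_def by simp
      next
        case (Suc i)
        then have "p = 2 * 2 ^ (i + 1)" using pj by simp
        then show ?thesis by blast
      qed
    qed
    define SP where "SP = image_mset (\<lambda>p. spec 3 (real p)) P"
    define SQ where "SQ = image_mset (\<lambda>p. spec 2 (real p)) Q"
    have tySP: "\<forall>z\<in>#SP. \<exists>j. z = 3 * 2 ^ j"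
    proof
      fix z assume "z \<in># SP"
      then obtain p where p: "p \<in># P" "z = spec 3 (real p)" unfolding SP_def by (auto simp only: in_image_mset)
      obtain j where pj: "p = 2 * 2 ^ (j + 1)" using tyP[OF p(1)] by blast
      have "z = 3 * 2 ^ j" unfolding p(2) pj by (rule spec3_of2)
      then show "\<exists>j. z = 3 * 2 ^ j" by blast
    qed
    have dSP: "dens SP = 4 / 3 * x" unfolding SP_def x_def
    proof (rule dens_image_eq)
      fix p assume "p \<in># P"
      then obtain j where pj: "p = 2 * 2 ^ (j + 1)" using tyP by blast
      have e: "spec 3 (real p) = 3 * 2 ^ j" unfolding pj by (rule spec3_of2)
      have "1 / real (3 * 2 ^ j :: nat) = 4 / 3 * (1 / real (2 * 2 ^ (j + 1) :: nat))"
        by (simp add: field_simps)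
      then show "1 / real (spec 3 (real p)) = 4 / 3 * (1 / real p)" unfolding e unfolding pj .
    qed
    have tySQ: "\<forall>z\<in>#SQ. \<exists>j. z = 2 * 2 ^ j"
    proof
      fix z assume "z \<in># SQ"
      then obtain p where p: "p \<in># Q" "z = spec 2 (real p)" unfolding SQ_def by (auto simp only: in_image_mset)
      have "p \<in># C" using QC p(1) by (rule mset_subset_eqD)
      then obtain j where pj: "p = 3 * 2 ^ j" using tyC by blast
      have "z = 2 * 2 ^ j" unfolding p(2) pj by (rule spec2_of3)
      then show "\<exists>j. z = 2 * 2 ^ j" by blast
    qed
    have dSQ: "dens SQ = 3 / 2 * y" unfolding SQ_def y_def
    proof (rule dens_image_eq)
      fix p assume pQ: "p \<in># Q"
      have "p \<in># C" using QC pQ by (rule mset_subset_eqD)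
      then obtain j where pj: "p = 3 * 2 ^ j" using tyC by blast
      have e: "spec 2 (real p) = 2 * 2 ^ j" unfolding pj by (rule spec2_of3)
      have "1 / real (2 * 2 ^ j :: nat) = 3 / 2 * (1 / real (3 * 2 ^ j :: nat))"
        by (simp add: field_simps)
      then show "1 / real (spec 2 (real p)) = 3 / 2 * (1 / real p)" unfolding e unfolding pj .
    qed
    have tyCSP: "\<forall>z\<in>#C + SP. \<exists>j. z = 3 * 2 ^ j" using tyC tySP by auto
    have tyBSQ: "\<forall>z\<in>#B + SQ. \<exists>j. z = 2 * 2 ^ j" using tyB tySQ by auto
    have out: "cc_output A P Q = cc_normalize B C P Q" unfolding cc_output_def B_def C_def ..
    show ?thesis
    proof (cases "x + y = 0")
      case True
      then have "x = 0" "y = 0" using x0 y0 by linarith+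
      have "cc_normalize B C P Q = (B, C)" using True unfolding cc_normalize_def x_def y_def by simp
      have "real_of_int (4 * r + 3 * s) \<le> real_of_int 7" using K \<open>x = 0\<close> \<open>y = 0\<close> by simp
      then have "4 * r + 3 * s \<le> 7" by (simp only: of_int_le_iff)
      then have "r + s \<le> 2" using r0 s0 by linarith
      then have "real_of_int (r + s) \<le> real_of_int 2" by (simp only: of_int_le_iff)
      then have "dens B + 3 / 2 * dens C \<le> 1" using hx hy \<open>x = 0\<close> \<open>y = 0\<close> by simp
      then have "schedulable (B + C)" by (rule schedA[OF tyB tyC])
      then show ?thesis using out \<open>cc_normalize B C P Q = (B, C)\<close> by simp
    next
      case nz: False
      have pos: "8 * x + 9 * y > 0" using nz x0 y0 by linarith
      show ?thesis
      proof (cases "4/3 * x + y \<le> 1/3")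
        case ca: True
        have nrm: "cc_normalize B C P Q = (B - P, C + SP)"
          using nz ca unfolding cc_normalize_def x_def y_def SP_def by simp
        have "real_of_int (4 * r + 3 * s) < real_of_int 7" using K pos by simp
        then have i1: "4 * r + 3 * s < 7" by (simp only: of_int_less_iff)
        show ?thesis
        proof (cases "r = 0 \<and> s = 2")
          case True
          then have "dens (B - P) = 0" using dBP by simp
          then have BP0: "B - P = {#}" using posBP by (rule dens_zero_empty)
          have "dens (C + SP) \<le> 1" using hy dSP ca True dens_plus[of C SP] by simp
          then have "schedulable (C + SP)" by (rule schedB[OF tyCSP])
          then show ?thesis using out nrm BP0 by simp
        next
          case False
          then have "r + s \<le> 1" using i1 r0 s0 by presburger
          then have "real_of_int (r + s) \<le> real_of_int 1" by (simp only: of_int_le_iff)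
          then have rs': "real_of_int r + real_of_int s \<le> 1" by simp
          have "dens (B - P) + 3 / 2 * dens (C + SP) \<le> 1" using dBP hy dSP ca rs' dens_plus[of C SP] by linarith
          then have "schedulable (B - P + (C + SP))" by (rule schedA[OF tyBP tyCSP])
          then show ?thesis using out nrm by simp
        qed
      next
        case na: False
        show ?thesis
        proof (cases "4/3 * x + y \<le> 2/3 \<and> x + 3/2 * y \<le> 1/2")
          case cb: True
          have nrm: "cc_normalize B C P Q = (B + SQ, C - Q)"
            using nz na cb unfolding cc_normalize_def x_def y_def SQ_def by simp
          have "real_of_int (4 * r + 3 * s) < real_of_int 5" using K na y0 by simp
          then have i1: "4 * r + 3 * s < 5" by (simp only: of_int_less_iff)
          then have "r + s \<le> 1" using r0 s0 by presburger
          then have "real_of_int (r + s) \<le> real_of_int 1" by (simp only: of_int_le_iff)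
          then have rs': "real_of_int r + real_of_int s \<le> 1" by simp
          have "dens (B + SQ) + 3 / 2 * dens (C - Q) \<le> 1" using hx dCQ dSQ cb rs' dens_plus[of B SQ] by linarith
          then have "schedulable (B + SQ + (C - Q))" by (rule schedA[OF tyBSQ tyCQ])
          then show ?thesis using out nrm by simp
        next
          case nb: False
          show ?thesis
          proof (cases "4/3 * x + y \<le> 2/3")
            case cc: True
            have nrm: "cc_normalize B C P Q = (B - P, C + SP)"
              using nz na nb cc unfolding cc_normalize_def x_def y_def SP_def by simp
            have "x + 3/2 * y > 1/2" using nb cc by linarith
            then have "real_of_int (4 * r + 3 * s) < real_of_int 4" using K na by simp
            then have i1: "4 * r + 3 * s < 4" by (simp only: of_int_less_iff)
            then have rs: "r = 0" "s \<le> 1" using r0 s0 by presburger+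
            then have "real_of_int s \<le> real_of_int 1" by (simp only: of_int_le_iff)
            have "dens (B - P) = 0" using dBP rs by simp
            then have BP0: "B - P = {#}" using posBP by (rule dens_zero_empty)
            have "real_of_int s \<le> 1" using \<open>real_of_int s \<le> real_of_int 1\<close> by simp
            then have "dens (C + SP) \<le> 1" using hy dSP cc dens_plus[of C SP] by linarith
            then have "schedulable (C + SP)" by (rule schedB[OF tyCSP])
            then show ?thesis using out nrm BP0 by simp
          next
            case cd: False
            have nrm: "cc_normalize B C P Q = (B, C)"
              using nz na nb cd unfolding cc_normalize_def x_def y_def by simp
            have "real_of_int (4 * r + 3 * s) < real_of_int 3" using K cd y0 by simp
            then have i1: "4 * r + 3 * s < 3" by (simp only: of_int_less_iff)
            then have rs: "r = 0" "s = 0" using r0 s0 by presburger+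
            have "dens B + 3 / 2 * dens C \<le> 1" using hx hy rs x0 y0 by simp
            then have "schedulable (B + C)" by (rule schedA[OF tyB tyC])
            then show ?thesis using out nrm by simp
          qed
        qed
      qed
    qed
  qed
  show ?thesis using part1 part2 by blast
qed

end
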